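(* Let $v,k$ be positive integers with $k\mid v$ and $v\mid k^2$, and put $\lambda=k^2/v$. In $\mathbb{Z}_v$ let $A_X=\{0,1,\dots,k-1\}$ and $A_Y=\{ak, ak+1,\dots, ak+\lambda-1 : a=0,1,\dots,\tfrac{v}{k}-1\}$. Then (i) $\{A_X,A_Y\}$ is a $(v,2,k,\lambda)$-PSEDF in $\mathbb{Z}_v$, and (ii) $\{A_X,A_Y\}$ is a non-disjoint $(v,2,k,\lambda)$-SEDF in $\mathbb{Z}_v$.
   Context: Groups are written additively. For subsets $A,B$ of a group $G$, $\Delta(A,B)$ is the multiset $\{a-b:a\in A,b\in B\}$ and $\lambda G$ is the multiset with each element of $G$ exactly $\lambda$ times. For $G$ of order $v$ and $m>1$, a family of $k$-subsets $\{A_1,\dots,A_m\}$ of $G$ is a $(v,m,k,\lambda)$-PSEDF if $\Delta(A_i,A_j)=\lambda G$ for every $i\neq j$; it is a non-disjoint $(v,m,k,\lambda)$-SEDF if for each $i$ the multiset union $\bigcup_{j\neq i}\Delta(A_i,A_j)$ equals $\lambda G$. The sets need not be disjoint. *)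

theory Defs
  imports Main "HOL-Library.Multiset"
begin

text \<open>An additive abelian group is represented by its carrier G and its
  subtraction operation sub (so that the difference a - b is sub a b).\<close>

definition Delta :: "('a \<Rightarrow> 'a \<Rightarrow> 'a) \<Rightarrow> 'a set \<Rightarrow> 'a set \<Rightarrow> 'a multiset" where
  "Delta sub A B = image_mset (\<lambda>(a, b). sub a b) (mset_set (A \<times> B))"

definition lam_G :: "nat \<Rightarrow> 'a set \<Rightarrow> 'a multiset" where
  "lam_G lam G = repeat_mset lam (mset_set G)"

text \<open>A family A_0, ..., A_(m-1) of k-subsets of G (indexed, sets need not be disjoint).\<close>
definition is_PSEDF :: "'a set \<Rightarrow> ('a \<Rightarrow> 'a \<Rightarrow> 'a) \<Rightarrow> nat \<Rightarrow> nat \<Rightarrow> nat \<Rightarrow> nat \<Rightarrow> (nat \<Rightarrow> 'a set) \<Rightarrow> bool" where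
  "is_PSEDF G sub v m k lam A \<longleftrightarrow>
     finite G \<and> card G = v \<and> m > 1 \<and>
     (\<forall>i<m. A i \<subseteq> G \<and> card (A i) = k) \<and>
     (\<forall>i<m. \<forall>j<m. i \<noteq> j \<longrightarrow> Delta sub (A i) (A j) = lam_G lam G)"

definition is_SEDF :: "'a set \<Rightarrow> ('a \<Rightarrow> 'a \<Rightarrow> 'a) \<Rightarrow> nat \<Rightarrow> nat \<Rightarrow> nat \<Rightarrow> nat \<Rightarrow> (nat \<Rightarrow> 'a set) \<Rightarrow> bool" where
  "is_SEDF G sub v m k lam A \<longleftrightarrow>
     finite G \<and> card G = v \<and> m > 1 \<and>
     (\<forall>i<m. A i \<subseteq> G \<and> card (A i) = k) \<and>
     (\<forall>i<m. (\<Sum>j\<in>{..<m} - {i}. Delta sub (A i) (A j)) = lam_G lam G)"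

definition Zv :: "nat \<Rightarrow> int set" where
  "Zv v = {0..<int v}"

definition Zv_sub :: "nat \<Rightarrow> int \<Rightarrow> int \<Rightarrow> int" where
  "Zv_sub v a b = (a - b) mod int v"

end

theory Submission imports Defs begin

lemma count_img_mset_set:
  assumes "finite S"
  shows "count (image_mset f (mset_set S)) y = card {x\<in>S. f x = y}"
proof -
  have "count (image_mset f (mset_set S)) y = (\<Sum>x | x \<in># mset_set S \<and> y = f x. count (mset_set S) x)"
    by (rule count_image_mset')
  also have "\<dots> = (\<Sum>x | x \<in> S \<and> y = f x. 1)"
    using assms by (intro sum.cong) auto
  also have "\<dots> = card {x\<in>S. f x = y}" by (simp add: eq_commute)
  finally show ?thesis .
qed

lemma count_pairs1:
  fixes v :: int
  assumes "Y \<subseteq> {0..<v}" "g \<in> {0..<v}" "v > 0"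
  shows "card {p\<in>X\<times>Y. (fst p - snd p) mod v = g} = card {x\<in>X. (x-g) mod v \<in> Y}"
proof -
  have "bij_betw (\<lambda>x. (x, (x-g) mod v)) {x\<in>X. (x-g) mod v \<in> Y} {p\<in>X\<times>Y. (fst p - snd p) mod v = g}"
  proof (rule bij_betw_byWitness[where f'=fst])
    show "(\<lambda>x. (x, (x - g) mod v)) ` {x \<in> X. (x - g) mod v \<in> Y} \<subseteq> {p \<in> X \<times> Y. (fst p - snd p) mod v = g}"
      using assms by (auto simp: mod_diff_right_eq)
    show "fst ` {p \<in> X \<times> Y. (fst p - snd p) mod v = g} \<subseteq> {x \<in> X. (x - g) mod v \<in> Y}"
    proof clarsimp
      fix x y assume xy: "x \<in> X" "y \<in> Y" "g = (x - y) mod v"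
      have "y = y mod v" using assms xy by auto
      have "(x - (x - y) mod v) mod v = y mod v" by (simp add: mod_diff_right_eq)
      thus "(x - (x - y) mod v) mod v \<in> Y" using \<open>y = y mod v\<close> xy by simp
    qed
    show "\<forall>p\<in>{p \<in> X \<times> Y. (fst p - snd p) mod v = g}. (fst p, (fst p - g) mod v) = p"
    proof clarsimp
      fix x y assume xy: "x \<in> X" "y \<in> Y" "g = (x - y) mod v"
      have "y = y mod v" using assms xy by auto
      have "(x - (x - y) mod v) mod v = y mod v" by (simp add: mod_diff_right_eq)
      thus "(x - (x - y) mod v) mod v = y" using \<open>y = y mod v\<close> by simp
    qed
  qed auto
  thus ?thesis by (simp add: bij_betw_same_card)
qed

lemma count_pairs2:
  fixes v :: int
  assumes "Y \<subseteq> {0..<v}" "g \<in> {0..<v}" "v > 0"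
  shows "card {p\<in>Y\<times>X. (fst p - snd p) mod v = g} = card {x\<in>X. (g+x) mod v \<in> Y}"
proof -
  have "bij_betw (\<lambda>x. ((g+x) mod v, x)) {x\<in>X. (g+x) mod v \<in> Y} {p\<in>Y\<times>X. (fst p - snd p) mod v = g}"
  proof (rule bij_betw_byWitness[where f'=snd])
    show "(\<lambda>x. ((g+x) mod v, x)) ` {x \<in> X. (g+x) mod v \<in> Y} \<subseteq> {p \<in> Y \<times> X. (fst p - snd p) mod v = g}"
      using assms by (auto simp: mod_diff_left_eq)
    show "snd ` {p \<in> Y \<times> X. (fst p - snd p) mod v = g} \<subseteq> {x \<in> X. (g+x) mod v \<in> Y}"
    proof clarsimp
      fix x y assume xy: "x \<in> X" "y \<in> Y" "g = (y - x) mod v"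
      have "y = y mod v" using assms xy by auto
      have "((y - x) mod v + x) mod v = y mod v" by (simp add: mod_add_left_eq)
      thus "((y - x) mod v + x) mod v \<in> Y" using \<open>y = y mod v\<close> xy by simp
    qed
    show "\<forall>p\<in>{p \<in> Y \<times> X. (fst p - snd p) mod v = g}. ((g + snd p) mod v, snd p) = p"
    proof clarsimp
      fix x y assume xy: "x \<in> X" "y \<in> Y" "g = (y - x) mod v"
      have "y = y mod v" using assms xy by auto
      have "((y - x) mod v + x) mod v = y mod v" by (simp add: mod_add_left_eq)
      thus "((y - x) mod v + x) mod v = y" using \<open>y = y mod v\<close> by simp
    qed
  qed auto
  thus ?thesis by (simp add: bij_betw_same_card)
qed

lemma card_shift:
  fixes k c :: int and lam :: nat
  assumes "k > 0" "int lam \<le> k"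
  shows "card {x\<in>{0..<k}. (x + c) mod k < int lam} = lam"
proof -
  let ?f = "\<lambda>x. (x + c) mod k"
  have inj: "inj_on ?f {0..<k}"
  proof (rule inj_onI)
    fix x y assume "x \<in> {0..<k}" "y \<in> {0..<k}" "(x + c) mod k = (y + c) mod k"
    hence "x mod k = y mod k" by (metis add_diff_cancel_right' mod_diff_left_eq)
    thus "x = y" using \<open>x \<in> {0..<k}\<close> \<open>y \<in> {0..<k}\<close> by simp
  qed
  have img: "?f ` {0..<k} = {0..<k}"
    by (rule endo_inj_surj) (use assms inj in auto)
  have "card {x\<in>{0..<k}. (x + c) mod k < int lam} = card (?f ` {x\<in>{0..<k}. (x + c) mod k < int lam})"
    by (rule card_image[symmetric]) (rule inj_on_subset[OF inj], auto)
  also have "?f ` {x\<in>{0..<k}. (x + c) mod k < int lam} = {z\<in>?f ` {0..<k}. z < int lam}" by auto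
  also have "\<dots> = {0..<int lam}" using img assms by auto
  finally show ?thesis by simp
qed

lemma delta_lam:
  fixes v :: nat and X Y :: "int set"
  assumes "finite X" "finite Y" "v > 0" "X \<subseteq> {0..<int v}" "Y \<subseteq> {0..<int v}"
    and c1: "\<And>g. g \<in> {0..<int v} \<Longrightarrow> card {x\<in>X. (x-g) mod int v \<in> Y} = lam"
    and c2: "\<And>g. g \<in> {0..<int v} \<Longrightarrow> card {x\<in>X. (g+x) mod int v \<in> Y} = lam"
  shows "Delta (Zv_sub v) X Y = lam_G lam (Zv v) \<and> Delta (Zv_sub v) Y X = lam_G lam (Zv v)"
proof -
  have fin: "finite (X \<times> Y)" "finite (Y \<times> X)" using assms by auto
  have "count (Delta (Zv_sub v) X Y) g = count (lam_G lam (Zv v)) g" for g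
  proof (cases "g \<in> {0..<int v}")
    case True
    have "{p\<in>X\<times>Y. (\<lambda>(a,b). Zv_sub v a b) p = g} = {p\<in>X\<times>Y. (fst p - snd p) mod int v = g}"
      by (auto simp: Zv_sub_def)
    then show ?thesis using True fin count_pairs1[of Y "int v" g X] c1[OF True] assms
      by (simp add: Delta_def lam_G_def count_img_mset_set Zv_def)
  next
    case False
    have "{p\<in>X\<times>Y. (\<lambda>(a,b). Zv_sub v a b) p = g} = {}"
      using False assms(3) by (auto simp: Zv_sub_def)
    then show ?thesis using False fin
      by (simp add: Delta_def lam_G_def count_img_mset_set Zv_def)
  qed
  moreover have "count (Delta (Zv_sub v) Y X) g = count (lam_G lam (Zv v)) g" for g
  proof (cases "g \<in> {0..<int v}")
    case True
    have "{p\<in>Y\<times>X. (\<lambda>(a,b). Zv_sub v a b) p = g} = {p\<in>Y\<times>X. (fst p - snd p) mod int v = g}"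
      by (auto simp: Zv_sub_def)
    then show ?thesis using True fin count_pairs2[of Y "int v" g X] c2[OF True] assms
      by (simp add: Delta_def lam_G_def count_img_mset_set Zv_def)
  next
    case False
    have "{p\<in>Y\<times>X. (\<lambda>(a,b). Zv_sub v a b) p = g} = {}"
      using False assms(3) by (auto simp: Zv_sub_def)
    then show ?thesis using False fin
      by (simp add: Delta_def lam_G_def count_img_mset_set Zv_def)
  qed
  ultimately show ?thesis by (simp add: multiset_eqI)
qed

theorem theorem3p1:
  fixes v k :: nat
  assumes "0 < v" and "0 < k" and "k dvd v" and "v dvd k ^ 2"
  defines "lam \<equiv> k ^ 2 div v"
  defines "AX \<equiv> {0..<int k}"
  defines "AY \<equiv> {int (a * k + t) | a t. a < v div k \<and> t < lam}"
  defines "A \<equiv> (\<lambda>i::nat. if i = 0 then AX else AY)"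
  shows "is_PSEDF (Zv v) (Zv_sub v) v 2 k lam A \<and> is_SEDF (Zv v) (Zv_sub v) v 2 k lam A"
proof -
  define n where "n = v div k"
  have v: "v = k * n" using assms(3) n_def by simp
  have "k * k = v * lam" using assms(4) lam_def by (simp add: power2_eq_square)
  hence k: "k = n * lam" using v assms(2) by simp
  have npos: "n > 0" and lpos: "lam > 0" using k assms(2) by auto
  have lk: "lam \<le> k" using k npos by simp
  have AY_img: "AY = (\<lambda>(a,t). int (a*k+t)) ` ({..<n} \<times> {..<lam})"
    unfolding AY_def n_def by auto
  have inj: "inj_on (\<lambda>(a,t). int (a*k+t)) ({..<n} \<times> {..<lam})"
  proof (rule inj_onI, clarify)
    fix a t a' t' assume h: "a < n" "t < lam" "a' < n" "t' < lam" "int (a*k+t) = int (a'*k+t')"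
    hence e: "a*k+t = a'*k+t'" using of_nat_eq_iff by blast
    have "(a*k+t) mod k = t" "(a'*k+t') mod k = t'" "(a*k+t) div k = a" "(a'*k+t') div k = a'"
      using h lk assms(2) by auto
    thus "a = a' \<and> t = t'" using e by metis
  qed
  have cardAY: "card AY = k" using AY_img card_image[OF inj] k by simp
  have AY_eq: "AY = {y\<in>{0..<int v}. y mod int k < int lam}"
  proof
    show "AY \<subseteq> {y\<in>{0..<int v}. y mod int k < int lam}"
    proof
      fix y assume "y \<in> AY"
      then obtain a t where h: "y = int (a*k+t)" "a < n" "t < lam" using AY_img by auto
      have "a*k + t < (a+1)*k" using h lk by simp
      also have "\<dots> \<le> n*k" using h by (intro mult_right_mono) auto
      finally have "a*k+t < v" using v by (simp add: mult.commute)
      moreover have "(a*k+t) mod k = t" using h lk by simp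
      ultimately show "y \<in> {y\<in>{0..<int v}. y mod int k < int lam}"
      proof -
        have "int (a*k+t) < int v" using \<open>a*k+t < v\<close> by linarith
        moreover have "int (a*k+t) mod int k = int t"
          using \<open>(a*k+t) mod k = t\<close> by (metis of_nat_mod)
        ultimately show ?thesis using h by simp
      qed
    qed
  next
    show "{y\<in>{0..<int v}. y mod int k < int lam} \<subseteq> AY"
    proof clarify
      fix y assume h: "y \<in> {0..<int v}" "y mod int k < int lam"
      obtain m where m: "y = int m" "m < v" using h by (metis atLeastLessThan_iff nonneg_int_cases of_nat_less_iff)
      have "m mod k < lam" using h m by (simp add: zmod_int[symmetric])
      moreover have "m div k < n" using m v assms(2)
        by (simp add: div_less_iff_less_mult mult.commute)
      moreover have "int m = int (m div k) * int k + int (m mod k)"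
        by (metis div_mult_mod_eq of_nat_add of_nat_mult)
      ultimately show "y \<in> AY" unfolding AY_img using m
        by (intro image_eqI[where x="(m div k, m mod k)"]) auto
    qed
  qed
  have kdv: "int k dvd int v" using assms(3) by simp
  have memY: "z mod int v \<in> AY \<longleftrightarrow> z mod int k < int lam" for z
    using AY_eq assms(1) mod_mod_cancel[OF kdv] by simp
  have D: "Delta (Zv_sub v) AX AY = lam_G lam (Zv v) \<and> Delta (Zv_sub v) AY AX = lam_G lam (Zv v)"
  proof (rule delta_lam)
    show "finite AX" "finite AY" "0 < v" using AX_def AY_img assms by auto
    have "k \<le> v" using v npos by simp
    then show "AX \<subseteq> {0..<int v}" using AX_def by auto
    show "AY \<subseteq> {0..<int v}" using AY_eq by auto
    fix g :: int
    show "card {x \<in> AX. (x - g) mod int v \<in> AY} = lam"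
      using card_shift[of "int k" lam "-g"] assms(2) lk unfolding memY AX_def by simp
    show "card {x \<in> AX. (g + x) mod int v \<in> AY} = lam"
      using card_shift[of "int k" lam "g"] assms(2) lk unfolding memY AX_def by (simp add: add.commute)
  qed
  have base: "finite (Zv v) \<and> card (Zv v) = v \<and> (\<forall>i<2. A i \<subseteq> Zv v \<and> card (A i) = k)"
  proof -
    have "k \<le> v" using v npos by simp
    have "AY \<subseteq> Zv v" using AY_eq by (auto simp: Zv_def)
    moreover have "AX \<subseteq> Zv v" using \<open>k \<le> v\<close> by (auto simp: Zv_def AX_def)
    ultimately show ?thesis using cardAY by (auto simp: Zv_def A_def AX_def less_2_cases_iff)
  qed
  have "{..<2::nat} - {0} = {1}" "{..<2::nat} - {1} = {0}" by auto
  then show ?thesis using base D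
    unfolding is_PSEDF_def is_SEDF_def A_def
    by (auto simp: less_2_cases_iff)
qed

end
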